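(* Let $n = 4k+3$ with $k\ge 0$ an integer, and let $m \ge 3n+5$. Then every product $(a,a+2)(b,b+2)\in S_m$ of two even-string transpositions, and every such product of two odd-string transpositions, with $a,a+2,b,b+2$ four distinct numbers, is a product of $n$-crossing permutations over $S_m$.
   Context: For integers $2\le n\le m$ and $1 \le j \le m-n+1$, the $n$-crossing permutation $\pi_j\in S_m$ is $\pi_j=(j,\,j+n-1)(j+1,\,j+n-2)\cdots$, i.e. the involution sending $i \mapsto 2j+n-1-i$ for $j\le i\le j+n-1$ and fixing all other elements of $\{1,\dots,m\}$. The $n$-crossing permutations over $S_m$ are $\pi_1,\dots,\pi_{m-n+1}$. A transposition $(i,i+2)\in S_m$ (with $1\le i\le m-2$) is called an even-string transposition if $i$ is even and an odd-string transposition if $i$ is odd. *)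

theory Defs
  imports "HOL-Combinatorics.Transposition"
begin

text \<open>Permutations of {1..m} are represented as functions nat => nat that are the
identity outside {1..m}. The n-crossing permutation pi_j sends i to 2j+n-1-i for
j <= i <= j+n-1 and fixes everything else.\<close>

definition crossing_perm :: "nat \<Rightarrow> nat \<Rightarrow> nat \<Rightarrow> nat" where
  "crossing_perm n j i = (if j \<le> i \<and> i \<le> j + n - 1 then 2 * j + n - 1 - i else i)"

definition crossing_product :: "nat \<Rightarrow> nat \<Rightarrow> (nat \<Rightarrow> nat) \<Rightarrow> bool" where
  "crossing_product n m \<sigma> \<longleftrightarrow>
     (\<exists>js. set js \<subseteq> {1..m - n + 1} \<and> \<sigma> = foldr (\<lambda>j f. crossing_perm n j \<circ> f) js id)"

end

theory Submission
  imports Defs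
begin

definition sF :: "nat \<Rightarrow> nat \<Rightarrow> nat \<Rightarrow> nat" where
 "sF n j z = (if z = j then j+n-1 else if z = j+1 then j+n else if j+2 \<le> z \<and> z \<le> j+n then z-2 else z)"
definition sG :: "nat \<Rightarrow> nat \<Rightarrow> nat \<Rightarrow> nat" where
 "sG n j z = (if z = j+n-1 then j else if z = j+n then j+1 else if j \<le> z \<and> z+2 \<le> j+n then z+2 else z)"

lemma sA: "n \<ge> 3 \<Longrightarrow> crossing_perm n j (crossing_perm n (j+1) z) = sF n j z"
  unfolding crossing_perm_def sF_def by auto

lemma sAi: "n \<ge> 3 \<Longrightarrow> crossing_perm n (j+1) (crossing_perm n j z) = sG n j z"
  unfolding crossing_perm_def sG_def by auto

definition T :: "nat \<Rightarrow> nat \<Rightarrow> nat" where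
  "T c = transpose c (c+2) \<circ> transpose (c+2) (c+4)"

lemma T_apply: "T c z = (if z = c then c+2 else if z = c+2 then c+4 else if z = c+4 then c else z)"
  unfolding T_def transpose_def by auto

lemma sG1: "n \<ge> 5 \<Longrightarrow> z < j \<or> z > j + n \<Longrightarrow> sG n j z = z" by (auto simp: sG_def)
lemma sG2: "n \<ge> 5 \<Longrightarrow> z = j+n-1 \<Longrightarrow> sG n j z = j" by (auto simp: sG_def)
lemma sG3: "n \<ge> 5 \<Longrightarrow> z = j+n \<Longrightarrow> sG n j z = j+1" by (auto simp: sG_def)
lemma sG4: "n \<ge> 5 \<Longrightarrow> j \<le> z \<Longrightarrow> z + 2 \<le> j+n \<Longrightarrow> sG n j z = z+2" by (auto simp: sG_def)
lemma sF1: "n \<ge> 5 \<Longrightarrow> z < j \<or> z > j + n \<Longrightarrow> sF n j z = z" by (auto simp: sF_def)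
lemma sF2: "n \<ge> 5 \<Longrightarrow> z = j \<Longrightarrow> sF n j z = j+n-1" by (auto simp: sF_def)
lemma sF3: "n \<ge> 5 \<Longrightarrow> z = j+1 \<Longrightarrow> sF n j z = j+n" by (auto simp: sF_def)
lemma sF4: "n \<ge> 5 \<Longrightarrow> j+2 \<le> z \<Longrightarrow> z \<le> j+n \<Longrightarrow> sF n j z = z-2" by (auto simp: sF_def)

lemma base_pt: assumes n: "n \<ge> 5"
  shows "sG n (j+n) (sF n j (sF n (j+n) (sG n j z))) = T (j+n-2) z"
proof -
  consider "z < j" | "z = j" | "z = j+1" | "j+2 \<le> z \<and> z \<le> j+n-3" | "z = j+n-2" | "z = j+n-1"
    | "z = j+n" | "z = j+n+1" | "z = j+n+2" | "j+n+3 \<le> z \<and> z \<le> j+2*n" | "z > j+2*n" by linarith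
  then show ?thesis
  proof cases
    case 1
    then show ?thesis using n by (auto simp: sG1 sF1 T_apply)
  next
    case 2
    then have "sG n j z = j+2" by (subst sG4) (use n 2 in arith)+
    then show ?thesis using n 2 by (auto simp: sG1 sF1 sF4 T_apply)
  next
    case 3
    then have "sG n j z = j+3" by (subst sG4) (use n 3 in arith)+
    then show ?thesis using n 3 by (auto simp: sG1 sF1 sF4 T_apply)
  next
    case 4
    then have "sG n j z = z+2" by (subst sG4) (use n 4 in arith)+
    moreover have "sF n (j+n) (z+2) = z+2" by (subst sF1) (use n 4 in arith)+
    moreover have "sF n j (z+2) = z" by (subst sF4) (use n 4 in arith)+
    moreover have "sG n (j+n) z = z" by (subst sG1) (use n 4 in arith)+
    moreover have "z \<noteq> j+n-2" "z \<noteq> j+n-2+2" "z \<noteq> j+n-2+4" using n 4 by arith+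
    ultimately show ?thesis by (simp only: T_apply if_False)
  next
    case 5
    then have "sG n j z = j+n" by (subst sG4) (use n 5 in arith)+
    moreover have "sF n (j+n) (j+n) = j+n+n-1" by (subst sF2) (use n 5 in arith)+
    moreover have "sF n j (j+n+n-1) = j+n+n-1" by (subst sF1) (use n 5 in arith)+
    moreover have "sG n (j+n) (j+n+n-1) = j+n" by (subst sG2) (use n 5 in arith)+
    ultimately show ?thesis using n 5 by (auto simp: T_apply)
  next
    case 6
    then have "sG n j z = j" by (subst sG2) (use n 6 in arith)+
    moreover have "sF n (j+n) j = j" by (subst sF1) (use n 6 in arith)+
    moreover have "sF n j j = j+n-1" by (subst sF2) (use n 6 in arith)+
    moreover have "sG n (j+n) (j+n-1) = j+n-1" by (subst sG1) (use n 6 in arith)+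
    ultimately show ?thesis using n 6 by (auto simp: T_apply)
  next
    case 7
    then have "sG n j z = j+1" by (subst sG3) (use n 7 in arith)+
    moreover have "sF n (j+n) (j+1) = j+1" by (subst sF1) (use n 7 in arith)+
    moreover have "sF n j (j+1) = j+n" by (subst sF3) (use n 7 in arith)+
    moreover have "sG n (j+n) (j+n) = j+n+2" by (subst sG4) (use n 7 in arith)+
    ultimately show ?thesis using n 7 by (auto simp: T_apply)
  next
    case 8
    then have "sG n j z = j+n+1" by (subst sG1) (use n 8 in arith)+
    moreover have "sF n (j+n) (j+n+1) = j+n+n" by (subst sF3) (use n 8 in arith)+
    moreover have "sF n j (j+n+n) = j+n+n" by (subst sF1) (use n 8 in arith)+
    moreover have "sG n (j+n) (j+n+n) = j+n+1" by (subst sG3) (use n 8 in arith)+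
    ultimately show ?thesis using n 8 by (auto simp: T_apply)
  next
    case 9
    then have "sG n j z = j+n+2" by (subst sG1) (use n 9 in arith)+
    moreover have "sF n (j+n) (j+n+2) = j+n" by (subst sF4) (use n 9 in arith)+
    moreover have "sF n j (j+n) = j+n-2" by (subst sF4) (use n 9 in arith)+
    moreover have "sG n (j+n) (j+n-2) = j+n-2" by (subst sG1) (use n 9 in arith)+
    ultimately show ?thesis using n 9 by (auto simp: T_apply)
  next
    case 10
    then have "sG n j z = z" by (subst sG1) (use n 10 in arith)+
    moreover have "sF n (j+n) z = z-2" by (subst sF4) (use n 10 in arith)+
    moreover have "sF n j (z-2) = z-2" by (subst sF1) (use n 10 in arith)+
    moreover have "sG n (j+n) (z-2) = z" by (subst sG4) (use n 10 in arith)+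
    ultimately show ?thesis using n 10 by (auto simp: T_apply)
  next
    case 11
    then show ?thesis using n by (auto simp: sG1 sF1 T_apply)
  qed
qed

lemma base_word: assumes "n \<ge> 5"
  shows "foldr (\<lambda>j f. crossing_perm n j \<circ> f) [j+n+1, j+n, j, j+1, j+n, j+n+1, j+1, j] id = T (j+n-2)"
proof
  fix z
  have "foldr (\<lambda>j f. crossing_perm n j \<circ> f) [j+n+1, j+n, j, j+1, j+n, j+n+1, j+1, j] id z
    = sG n (j+n) (sF n j (sF n (j+n) (sG n j z)))"
    using sA[of n] sAi[of n] assms by (simp add: add.assoc)
  then show "foldr (\<lambda>j f. crossing_perm n j \<circ> f) [j+n+1, j+n, j, j+1, j+n, j+n+1, j+1, j] id z = T (j+n-2) z"
    using base_pt[OF assms] by simp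
qed

definition W :: "nat \<Rightarrow> nat list \<Rightarrow> nat \<Rightarrow> nat" where
  "W n js = foldr (\<lambda>j f. crossing_perm n j \<circ> f) js id"

lemma W_Nil[simp]: "W n [] = id" by (simp add: W_def)
lemma W_Cons[simp]: "W n (j # js) = crossing_perm n j \<circ> W n js" by (simp add: W_def)
lemma W_app: "W n (xs @ ys) = W n xs \<circ> W n ys"
  by (induction xs) auto

lemma cp_invol: "n \<ge> 1 \<Longrightarrow> crossing_perm n j (crossing_perm n j z) = z"
  unfolding crossing_perm_def by auto

lemma W_rev_inv: "n \<ge> 1 \<Longrightarrow> W n (rev xs) (W n xs z) = z"
proof (induction xs arbitrary: z)
  case Nil then show ?case by simp
next
  case (Cons x xs)
  then show ?case by (simp add: W_app cp_invol)
qed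

lemma W_rev_inv2: "n \<ge> 1 \<Longrightarrow> W n xs (W n (rev xs) z) = z"
  using W_rev_inv[of n "rev xs" z] by simp

lemma cprod_iff: "crossing_product n m \<sigma> \<longleftrightarrow> (\<exists>js. set js \<subseteq> {1..m - n + 1} \<and> \<sigma> = W n js)"
  unfolding crossing_product_def W_def by simp

lemma cprod_id: "crossing_product n m id"
  unfolding cprod_iff by (rule exI[of _ "[]"]) simp

lemma cprod_comp: "crossing_product n m \<sigma> \<Longrightarrow> crossing_product n m \<tau> \<Longrightarrow> crossing_product n m (\<sigma> \<circ> \<tau>)"
  unfolding cprod_iff by (metis W_app Un_subset_iff set_append)

lemma cprod_W: "set ws \<subseteq> {1..m - n + 1} \<Longrightarrow> crossing_product n m (W n ws)"
  unfolding cprod_iff by blast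

lemma cprod_conj: "set ws \<subseteq> {1..m - n + 1} \<Longrightarrow> crossing_product n m \<sigma> \<Longrightarrow>
   crossing_product n m (W n ws \<circ> \<sigma> \<circ> W n (rev ws))"
  by (intro cprod_comp cprod_W) auto

lemma transp_conj:
  assumes "\<And>z. g (g' z) = z" "\<And>z. g' (g z) = z"
  shows "g \<circ> transpose x y \<circ> g' = transpose (g x) (g y)"
proof
  fix z
  obtain w where w: "z = g w" using assms(1) by metis
  then have "g' z = w" using assms(2) by simp
  moreover have "g a = g b \<longleftrightarrow> a = b" for a b using assms(2) by metis
  ultimately show "(g \<circ> transpose x y \<circ> g') z = transpose (g x) (g y) z"
    using w by (auto simp: transpose_def)
qed

lemma T_conj:
  assumes "\<And>z. g (g' z) = z" "\<And>z. g' (g z) = z"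
  shows "g \<circ> T c \<circ> g' = transpose (g c) (g (c+2)) \<circ> transpose (g (c+2)) (g (c+4))"
proof -
  have "g \<circ> T c \<circ> g' = (g \<circ> transpose c (c+2) \<circ> g') \<circ> (g \<circ> transpose (c+2) (c+4) \<circ> g')"
    using assms(2) by (auto simp: T_def fun_eq_iff)
  then show ?thesis using transp_conj[OF assms] by simp
qed

lemma step:
  assumes n7: "n \<ge> 7" and m: "m \<ge> 2 * n + 2" and x: "1 \<le> x" "x + 6 \<le> m"
  shows "crossing_product n m (T x) \<longleftrightarrow> crossing_product n m (T (x+2))"
proof -
  define j where "j = min x (m - n)"
  define ws where "ws = [j+1, j]"
  have ws: "set ws \<subseteq> {1..m - n + 1}" "set (rev ws) \<subseteq> {1..m - n + 1}"
    using x m n7 by (auto simp: ws_def j_def)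
  have n1: "n \<ge> 1" "n \<ge> 3" using n7 by auto
  have g: "W n ws z = sG n j z" for z using sAi[OF n1(2)] by (simp add: ws_def)
  have gx: "W n ws x = x + 2" "W n ws (x+2) = x + 4" "W n ws (x+4) = x + 6"
    unfolding g sG_def using x m n7 by (auto simp: j_def)
  have gx': "W n (rev ws) (x+2) = x" "W n (rev ws) (x+4) = x + 2" "W n (rev ws) (x+6) = x + 4"
    using W_rev_inv[OF n1(1), of ws] gx by metis+
  have inv1: "W n ws (W n (rev ws) z) = z" "W n (rev ws) (W n ws z) = z" for z
    using W_rev_inv[OF n1(1)] W_rev_inv2[OF n1(1)] by auto
  have hh: "x+2+2 = x+4" "x+2+4 = x+6" by simp_all
  have e1: "W n ws \<circ> T x \<circ> W n (rev ws) = T (x+2)"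
  proof -
    have "W n ws \<circ> T x \<circ> W n (rev ws) = transpose (W n ws x) (W n ws (x+2)) \<circ> transpose (W n ws (x+2)) (W n ws (x+4))"
      by (rule T_conj) (use inv1 in auto)
    also have "\<dots> = transpose (x+2) (x+4) \<circ> transpose (x+4) (x+6)"
      by (simp only: gx)
    also have "\<dots> = T (x+2)" by (simp only: T_def hh)
    finally show ?thesis .
  qed
  have e2: "W n (rev ws) \<circ> T (x+2) \<circ> W n (rev (rev ws)) = T x"
  proof -
    have "W n (rev ws) \<circ> T (x+2) \<circ> W n ws = transpose (W n (rev ws) (x+2)) (W n (rev ws) (x+2+2)) \<circ> transpose (W n (rev ws) (x+2+2)) (W n (rev ws) (x+2+4))"
      by (rule T_conj) (use inv1 in auto)
    also have "\<dots> = transpose x (x+2) \<circ> transpose (x+2) (x+4)"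
      by (simp only: gx' hh)
    also have "\<dots> = T x" by (simp only: T_def)
    finally show ?thesis by simp
  qed
  show ?thesis
    using cprod_conj[OF ws(1), of "T x"] cprod_conj[OF ws(2), of "T (x+2)"] e1 e2 by auto
qed

lemma steps:
  assumes n7: "n \<ge> 7" and m: "m \<ge> 2 * n + 2" and x: "1 \<le> x" "x + 2 * d + 4 \<le> m"
  shows "crossing_product n m (T x) \<longleftrightarrow> crossing_product n m (T (x + 2 * d))"
  using x
proof (induction d)
  case 0 then show ?case by simp
next
  case (Suc d)
  then have "crossing_product n m (T x) \<longleftrightarrow> crossing_product n m (T (x + 2 * d))" by simp
  also have "\<dots> \<longleftrightarrow> crossing_product n m (T (x + 2 * d + 2))"
    using step[OF n7 m, of "x + 2 * d"] Suc.prems by simp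
  finally show ?case by (simp add: add.assoc)
qed

lemma allT:
  assumes n7: "n \<ge> 7" and odd: "odd n" and m: "m \<ge> 3 * n + 5" and x: "1 \<le> x" "x + 4 \<le> m"
  shows "crossing_product n m (T x)"
proof -
  have n5: "n \<ge> 5" using n7 by simp
  define j :: nat where "j = (if even x then 1 else 2)"
  define b where "b = j + n - 2"
  have jb: "1 \<le> j" "j \<le> 2" "even (x + b)" using odd by (auto simp: j_def b_def)
  have "crossing_product n m (W n [j+n+1, j+n, j, j+1, j+n, j+n+1, j+1, j])"
    by (rule cprod_W) (use jb m in auto)
  then have base: "crossing_product n m (T b)"
    using base_word[OF n5, of j] by (simp add: W_def b_def)
  have m2: "m \<ge> 2 * n + 2" using m by simp
  show ?thesis
  proof (cases "x \<le> b")
    case True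
    define d where "d = (b - x) div 2"
    have "x + 2 * d = b" using True jb(3) unfolding d_def by (metis dvd_mult_div_cancel le_add_diff_inverse even_diff_nat add.commute)
    then show ?thesis using steps[OF n7 m2 x(1), of d] base jb m by (simp add: b_def)
  next
    case False
    define d where "d = (x - b) div 2"
    have "b + 2 * d = x" using False jb(3) unfolding d_def
      by (metis dvd_mult_div_cancel le_add_diff_inverse even_diff_nat add.commute nat_le_linear)
    then show ?thesis using steps[OF n7 m2, of b d] base jb x n7 by (simp add: b_def)
  qed
qed

lemma pairs:
  assumes n7: "n \<ge> 7" and odd: "odd n" and m: "m \<ge> 3 * n + 5" and a: "1 \<le> a" "a + 2 * d + 2 \<le> m"
  shows "crossing_product n m (transpose a (a+2) \<circ> transpose (a + 2 * d) (a + 2 * d + 2))"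
  using a
proof (induction d)
  case 0 then show ?case using cprod_id by (simp add: id_def)
next
  case (Suc d)
  have e: "transpose a (a+2) \<circ> transpose (a + 2 * Suc d) (a + 2 * Suc d + 2) =
    (transpose a (a+2) \<circ> transpose (a + 2 * d) (a + 2 * d + 2)) \<circ> T (a + 2 * d)"
    by (auto simp: T_def fun_eq_iff transpose_def)
  show ?case unfolding e
  proof (rule cprod_comp)
    show "crossing_product n m (transpose a (a+2) \<circ> transpose (a + 2 * d) (a + 2 * d + 2))"
      by (rule Suc.IH) (use Suc.prems in simp_all)
    show "crossing_product n m (T (a + 2 * d))"
      by (rule allT[OF n7 odd m]) (use Suc.prems in simp_all)
  qed
qed

theorem lemma4p3:
  fixes k n m a b :: nat
  assumes "n = 4 * k + 3"
    and "m \<ge> 3 * n + 5"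
    and "1 \<le> a" "a \<le> m - 2" "1 \<le> b" "b \<le> m - 2"
    and "(even a \<and> even b) \<or> (odd a \<and> odd b)"
    and "distinct [a, a + 2, b, b + 2]"
  shows "crossing_product n m (transpose a (a + 2) \<circ> transpose b (b + 2))"
proof (cases "k = 0")
  case True
  then have n3: "n = 3" using assms(1) by simp
  have cp: "crossing_perm 3 j = transpose j (j+2)" for j
    by (auto simp: fun_eq_iff crossing_perm_def transpose_def)
  have "crossing_product n m (W n [a, b])"
    by (rule cprod_W) (use assms n3 in auto)
  then show ?thesis by (simp add: n3 cp)
next
  case False
  then have n7: "n \<ge> 7" and odd: "odd n" using assms(1) by auto
  have comm: "transpose a (a + 2) \<circ> transpose b (b + 2) = transpose b (b + 2) \<circ> transpose a (a + 2)"
    using assms(8) by (auto simp: fun_eq_iff transpose_def)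
  have par: "even (a + b)" using assms(7) by auto
  have ab: "a \<noteq> b" using assms(8) by auto
  show ?thesis
  proof (cases "a < b")
    case True
    define d where "d = (b - a) div 2"
    have "b = a + 2 * d" using True par unfolding d_def
      by (metis dvd_mult_div_cancel le_add_diff_inverse even_diff_nat add.commute less_imp_le)
    then show ?thesis using pairs[OF n7 odd assms(2), of a d] assms by simp
  next
    case False
    then have ba: "b < a" using ab by simp
    define d where "d = (a - b) div 2"
    have "a = b + 2 * d" using ba par unfolding d_def
      by (metis dvd_mult_div_cancel le_add_diff_inverse even_diff_nat add.commute less_imp_le)
    then show ?thesis using pairs[OF n7 odd assms(2), of b d] assms comm by simp
  qed
qed

end
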